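(* Let $G$ be a group, $\mathcal F$ a family of subgroups and $H\le G$. Let $L,P$ be finitely generated $\mathbb ZG$-modules with $P\subseteq L$, and $M,Q$ finitely generated $\mathbb ZH$-modules with $Q\subseteq M$, such that, as $\mathbb ZH$-modules, $M\subseteq L$ and $Q\subseteq P$, with all these inclusions compatible (the square $Q\hookrightarrow M\hookrightarrow L$, $Q\hookrightarrow P\hookrightarrow L$ commutes). Let $\|\cdot\|_L,\|\cdot\|_M$ be filling norms on $L$ and $M$, and suppose there is an integer $C_0\ge1$ with $\|x\|_L\le C_0\|x\|_M$ for all $x\in M$. Suppose $P$ is $\mathcal F$-free and there is a $\mathbb ZH$-homomorphism $\rho:P\to Q$ with $\rho\circ\imath=\mathrm{Id}_Q$, where $\imath:Q\to P$ is the inclusion. Then $\mathrm{Dist}^M_Q\preceq\mathrm{Dist}^L_P$.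
   Context: Filling norms: for a free $\mathbb ZG$-module with basis $B$, $\|\cdot\|_1$ is the $\ell_1$-norm for the $\mathbb Z$-basis $\{gb\}$; for a finitely generated $\mathbb ZG$-module $N$ and surjection $\eta:F\to N$ from a finitely generated based free module, $\|n\|_\eta=\min\{\|x\|_1:\eta(x)=n\}$. The distortion of a finitely generated submodule $P$ of a finitely generated $\mathbb ZG$-module $L$ is $\mathrm{Dist}^L_P(k)=\max\{\|\gamma\|_P:\gamma\in P,\|\gamma\|_L\le k\}$ (possibly $\infty$) for chosen filling norms $\|\cdot\|_P,\|\cdot\|_L$; similarly over $\mathbb ZH$. A $\mathbb ZG$-module is $\mathcal F$-free if it is isomorphic to $\mathbb Z[S]$ for a $G$-set $S$ all of whose isotropy groups lie in $\mathcal F$. $f\preceq g$ means $\exists C>0$: $f(n)\le Cg(Cn+C)+Cn+C$ for all $n$. *)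

theory Defs
  imports "HOL-Algebra.Group" "HOL-Library.Extended_Nat"
begin

definition zmul :: "int \<Rightarrow> 'm::ab_group_add \<Rightarrow> 'm" where
  "zmul k x = (if 0 \<le> k then (\<Sum>i<nat k. x) else - (\<Sum>i<nat (- k). x))"

definition is_ZG_action :: "('g, 'b) monoid_scheme \<Rightarrow> ('g \<Rightarrow> 'm::ab_group_add \<Rightarrow> 'm) \<Rightarrow> bool" where
  "is_ZG_action G act \<longleftrightarrow>
     (\<forall>g\<in>carrier G. \<forall>x y. act g (x + y) = act g x + act g y) \<and>
     (\<forall>x. act \<one>\<^bsub>G\<^esub> x = x) \<and>
     (\<forall>g\<in>carrier G. \<forall>h\<in>carrier G. \<forall>x. act (g \<otimes>\<^bsub>G\<^esub> h) x = act g (act h x))"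

inductive_set gen_sub :: "'g set \<Rightarrow> ('g \<Rightarrow> 'm::ab_group_add \<Rightarrow> 'm) \<Rightarrow> 'm set \<Rightarrow> 'm set"
  for K act S where
  gen_base: "x \<in> S \<Longrightarrow> x \<in> gen_sub K act S"
| gen_zero: "0 \<in> gen_sub K act S"
| gen_add: "x \<in> gen_sub K act S \<Longrightarrow> y \<in> gen_sub K act S \<Longrightarrow> x + y \<in> gen_sub K act S"
| gen_neg: "x \<in> gen_sub K act S \<Longrightarrow> - x \<in> gen_sub K act S"
| gen_act: "g \<in> K \<Longrightarrow> x \<in> gen_sub K act S \<Longrightarrow> act g x \<in> gen_sub K act S"

definition fg_module :: "'g set \<Rightarrow> ('g \<Rightarrow> 'm::ab_group_add \<Rightarrow> 'm) \<Rightarrow> 'm set \<Rightarrow> bool" where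
  "fg_module K act N \<longleftrightarrow> (\<exists>S. finite S \<and> N = gen_sub K act S)"

text \<open>A surjection eta from the based free ZK-module F = ZK^m (basis b_0..b_(m-1)) onto N
  is determined by the list ss of images ss!i = eta(b_i); it is surjective iff the
  entries of ss generate N.\<close>
definition filling_gens :: "'g set \<Rightarrow> ('g \<Rightarrow> 'm::ab_group_add \<Rightarrow> 'm) \<Rightarrow> 'm set \<Rightarrow> 'm list \<Rightarrow> bool" where
  "filling_gens K act N ss \<longleftrightarrow> N = gen_sub K act (set ss)"

text \<open>Elements of F = ZK^m: finitely supported coefficient functions a g i
  (coefficient of the Z-basis element g b_i, g in K, i < m).\<close>
definition coeff_supp :: "('g \<Rightarrow> nat \<Rightarrow> int) \<Rightarrow> ('g \<times> nat) set" where
  "coeff_supp a = {(g, i). a g i \<noteq> 0}"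

definition free_elem :: "'g set \<Rightarrow> nat \<Rightarrow> ('g \<Rightarrow> nat \<Rightarrow> int) \<Rightarrow> bool" where
  "free_elem K m a \<longleftrightarrow> finite (coeff_supp a) \<and> coeff_supp a \<subseteq> K \<times> {..<m}"

definition l1_norm :: "('g \<Rightarrow> nat \<Rightarrow> int) \<Rightarrow> nat" where
  "l1_norm a = (\<Sum>(g, i)\<in>coeff_supp a. nat \<bar>a g i\<bar>)"

definition eta_map :: "('g \<Rightarrow> 'm::ab_group_add \<Rightarrow> 'm) \<Rightarrow> 'm list \<Rightarrow> ('g \<Rightarrow> nat \<Rightarrow> int) \<Rightarrow> 'm" where
  "eta_map act ss a = (\<Sum>(g, i)\<in>coeff_supp a. zmul (a g i) (act g (ss ! i)))"

definition fnorm :: "'g set \<Rightarrow> ('g \<Rightarrow> 'm::ab_group_add \<Rightarrow> 'm) \<Rightarrow> 'm list \<Rightarrow> 'm \<Rightarrow> nat" where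
  "fnorm K act ss n =
     (LEAST k. \<exists>a. free_elem K (length ss) a \<and> eta_map act ss a = n \<and> l1_norm a = k)"

definition Dist :: "'g set \<Rightarrow> ('g \<Rightarrow> 'm::ab_group_add \<Rightarrow> 'm) \<Rightarrow> 'm list \<Rightarrow> 'm set \<Rightarrow> 'm list \<Rightarrow> nat \<Rightarrow> enat" where
  "Dist K act sN Sub sSub k =
     (SUP \<gamma>\<in>{\<gamma>. \<gamma> \<in> Sub \<and> fnorm K act sN \<gamma> \<le> k}. enat (fnorm K act sSub \<gamma>))"

definition dom_le :: "(nat \<Rightarrow> enat) \<Rightarrow> (nat \<Rightarrow> enat) \<Rightarrow> bool" where
  "dom_le f g \<longleftrightarrow> (\<exists>C::nat. C > 0 \<and>
     (\<forall>n. f n \<le> enat C * g (C * n + C) + enat (C * n + C)))"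

definition z_indep :: "'m::ab_group_add set \<Rightarrow> bool" where
  "z_indep B \<longleftrightarrow> (\<forall>T c. finite T \<longrightarrow> T \<subseteq> B \<longrightarrow> (\<Sum>b\<in>T. zmul (c b) b) = 0 \<longrightarrow> (\<forall>b\<in>T. c b = 0))"

definition z_span :: "'m::ab_group_add set \<Rightarrow> 'm set" where
  "z_span B = {x. \<exists>T c. finite T \<and> T \<subseteq> B \<and> x = (\<Sum>b\<in>T. zmul (c b) b)}"

text \<open>P is F-free: P is isomorphic to Z[S] for a G-set S with all isotropy groups in F,
  i.e. P has a G-invariant Z-basis B all of whose stabilisers lie in F.\<close>
definition F_free :: "('g, 'b) monoid_scheme \<Rightarrow> ('g \<Rightarrow> 'm::ab_group_add \<Rightarrow> 'm) \<Rightarrow> 'g set set \<Rightarrow> 'm set \<Rightarrow> bool" where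
  "F_free G act \<F> P \<longleftrightarrow> (\<exists>B. B \<subseteq> P \<and> z_indep B \<and> z_span B = P \<and>
       (\<forall>g\<in>carrier G. \<forall>b\<in>B. act g b \<in> B) \<and>
       (\<forall>b\<in>B. {g\<in>carrier G. act g b = b} \<in> \<F>))"

end

theory Submission
  imports Defs
begin

definition sgnsum :: "(bool \<times> 'm::ab_group_add) list \<Rightarrow> 'm" where
  "sgnsum l = sum_list (map (\<lambda>(s,y). if s then y else - y) l)"

lemma sgnsum_Nil[simp]: "sgnsum [] = 0" by (simp add: sgnsum_def)
lemma sgnsum_Cons[simp]: "sgnsum ((s,y)#l) = (if s then y else - y) + sgnsum l"
  by (simp add: sgnsum_def)
lemma sgnsum_append[simp]: "sgnsum (l1 @ l2) = sgnsum l1 + sgnsum l2"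
  by (simp add: sgnsum_def)

definition flp :: "(bool \<times> 'm) list \<Rightarrow> (bool \<times> 'm) list" where
  "flp l = map (\<lambda>(s,y). (\<not> s, y)) l"

lemma sgnsum_flp: "sgnsum (flp l) = - sgnsum l"
  by (induction l) (auto simp: flp_def)
lemma set_flp: "snd ` set (flp l) = snd ` set l"
  by (force simp: flp_def image_iff)
lemma length_flp[simp]: "length (flp l) = length l" by (simp add: flp_def)

definition rep :: "'m::ab_group_add set \<Rightarrow> 'm \<Rightarrow> nat \<Rightarrow> bool" where
  "rep Z x n \<longleftrightarrow> (\<exists>l. x = sgnsum l \<and> snd ` set l \<subseteq> Z \<and> length l \<le> n)"

lemma rep_zero: "rep Z 0 n" unfolding rep_def by (rule exI[of _ "[]"]) simp

lemma rep_add: "rep Z x n \<Longrightarrow> rep Z y m \<Longrightarrow> rep Z (x + y) (n + m)"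
  unfolding rep_def
  apply clarify
  subgoal for l1 l2 by (rule exI[of _ "l1 @ l2"]) auto
  done

lemma rep_neg: "rep Z x n \<Longrightarrow> rep Z (- x) n"
  unfolding rep_def
  apply clarify
  subgoal for l by (rule exI[of _ "flp l"]) (simp add: sgnsum_flp set_flp)
  done

lemma rep_mono: "rep Z x n \<Longrightarrow> n \<le> m \<Longrightarrow> Z \<subseteq> Z' \<Longrightarrow> rep Z' x m"
  unfolding rep_def by fastforce

lemma rep_atom: "y \<in> Z \<Longrightarrow> rep Z y 1"
  unfolding rep_def by (rule exI[of _ "[(True,y)]"]) simp

lemma rep_sign_atom: "y \<in> Z \<Longrightarrow> rep Z (if s then y else - y) 1"
  using rep_atom[of y Z] rep_neg[OF rep_atom[of y Z]] by (cases s) auto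

lemma rep_subst:
  assumes "\<forall>p\<in>set l. rep Z (snd p) D"
  shows "rep Z (sgnsum l) (D * length l)"
  using assms
proof (induction l)
  case Nil then show ?case by (simp add: rep_zero)
next
  case (Cons p l)
  obtain s y where p: "p = (s,y)" by force
  have a: "rep Z (if s then y else - y) D" using Cons.prems p rep_neg by (cases s) auto
  have b: "rep Z (sgnsum l) (D * length l)" using Cons by auto
  have "rep Z ((if s then y else - y) + sgnsum l) (D + D * length l)"
    by (rule rep_add[OF a b])
  then show ?case by (simp add: p)
qed

lemma sgnsum_replicate: "sgnsum (replicate n (s,y)) = (if s then (\<Sum>i<n. y) else - (\<Sum>i<n. y))"
  by (induction n) (auto simp: algebra_simps)

lemma rep_zmul: "y \<in> Z \<Longrightarrow> rep Z (zmul k y) (nat \<bar>k\<bar>)"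
  unfolding rep_def
  apply (rule exI[of _ "replicate (nat \<bar>k\<bar>) (0 \<le> k, y)"])
  apply (auto simp: sgnsum_replicate zmul_def)
  done

lemma rep_sum:
  assumes "finite S" "\<forall>j\<in>S. rep Z (f j) (w j)"
  shows "rep Z (\<Sum>j\<in>S. f j) (\<Sum>j\<in>S. w j)"
  using assms by (induction S rule: finite_induct) (auto simp: rep_zero rep_add)

lemma zspan_rep: "x \<in> z_span B \<Longrightarrow> \<exists>n. rep B x n"
  unfolding z_span_def
  apply clarify
  subgoal for T c
    apply (rule exI[of _ "\<Sum>b\<in>T. nat \<bar>c b\<bar>"])
    apply (rule rep_sum) apply auto
    apply (rule rep_zmul) apply auto done
  done

lemma zmul_succ: "zmul (k + 1) y = zmul k y + y"
proof (cases "0 \<le> k")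
  case True
  then have "nat (k+1) = Suc (nat k)" by simp
  then show ?thesis using True by (simp add: zmul_def)
next
  case False
  then obtain m where m: "nat (-k) = Suc m" by (metis gr0_implies_Suc zero_less_nat_eq neg_0_less_iff_less not_le)
  have m2: "nat (- (k+1)) = m" using m by simp
  show ?thesis
  proof (cases "0 \<le> k + 1")
    case True
    then have "m = 0" using m2 by simp
    then show ?thesis using m m2 True False by (simp add: zmul_def)
  next
    case F2: False
    then show ?thesis using m m2 False by (simp add: zmul_def)
  qed
qed

lemma zmul_pred: "zmul (k - 1) y = zmul k y - y"
  using zmul_succ[of "k - 1" y] by simp

lemma zmul_0[simp]: "zmul 0 y = 0" by (simp add: zmul_def)


definition Zset :: "'g set \<Rightarrow> ('g \<Rightarrow> 'm::ab_group_add \<Rightarrow> 'm) \<Rightarrow> 'm list \<Rightarrow> 'm set" where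
  "Zset K act ss = {y. \<exists>g\<in>K. \<exists>i<length ss. y = act g (ss!i)}"

lemma eta_super:
  assumes "finite S" "coeff_supp a \<subseteq> S"
  shows "eta_map act ss a = (\<Sum>p\<in>S. zmul (a (fst p) (snd p)) (act (fst p) (ss ! snd p)))"
proof -
  have "eta_map act ss a = (\<Sum>p\<in>coeff_supp a. zmul (a (fst p) (snd p)) (act (fst p) (ss ! snd p)))"
    unfolding eta_map_def by (rule sum.cong) auto
  also have "\<dots> = (\<Sum>p\<in>S. zmul (a (fst p) (snd p)) (act (fst p) (ss ! snd p)))"
    by (rule sum.mono_neutral_left) (use assms in \<open>auto simp: coeff_supp_def\<close>)
  finally show ?thesis .
qed

lemma l1_super:
  assumes "finite S" "coeff_supp a \<subseteq> S"
  shows "l1_norm a = (\<Sum>p\<in>S. nat \<bar>a (fst p) (snd p)\<bar>)"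
proof -
  have "l1_norm a = (\<Sum>p\<in>coeff_supp a. nat \<bar>a (fst p) (snd p)\<bar>)"
    unfolding l1_norm_def by (rule sum.cong) auto
  also have "\<dots> = (\<Sum>p\<in>S. nat \<bar>a (fst p) (snd p)\<bar>)"
    by (rule sum.mono_neutral_left) (use assms in \<open>auto simp: coeff_supp_def\<close>)
  finally show ?thesis .
qed

lemma repA_list:
  assumes "snd ` set l \<subseteq> Zset K act ss"
  shows "\<exists>a. free_elem K (length ss) a \<and> eta_map act ss a = sgnsum l \<and> l1_norm a \<le> length l"
  using assms
proof (induction l)
  case Nil
  show ?case
    by (intro exI[of _ "\<lambda>_ _. 0"]) (simp add: coeff_supp_def free_elem_def eta_map_def l1_norm_def)
next
  case (Cons p l)
  obtain s y where p: "p = (s,y)" by force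
  from Cons.prems p have yZ: "y \<in> Zset K act ss" and lZ: "snd ` set l \<subseteq> Zset K act ss" by auto
  from yZ obtain g i where g: "g \<in> K" and i: "i < length ss" and y: "y = act g (ss!i)"
    unfolding Zset_def by auto
  from Cons.IH[OF lZ] obtain a where a: "free_elem K (length ss) a" "eta_map act ss a = sgnsum l"
    "l1_norm a \<le> length l" by blast
  define e :: int where "e = (if s then 1 else -1)"
  define a' where "a' = (\<lambda>g' i'. a g' i' + (if (g',i') = (g,i) then e else 0))"
  define S where "S = insert (g,i) (coeff_supp a)"
  have finS: "finite S" using a(1) by (simp add: S_def free_elem_def)
  have suppS: "coeff_supp a \<subseteq> S" by (auto simp: S_def)
  have suppS': "coeff_supp a' \<subseteq> S" by (auto simp: S_def a'_def coeff_supp_def split: if_splits)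
  have gi: "(g,i) \<in> S" by (simp add: S_def)
  have fe: "free_elem K (length ss) a'"
    unfolding free_elem_def
  proof
    show "finite (coeff_supp a')" using finS suppS' finite_subset by blast
    have "S \<subseteq> K \<times> {..<length ss}" using a(1) g i by (auto simp: S_def free_elem_def)
    then show "coeff_supp a' \<subseteq> K \<times> {..<length ss}" using suppS' by blast
  qed
  let ?f = "\<lambda>b p. zmul (b (fst p) (snd p)) (act (fst p) (ss ! snd p))"
  have rest: "(\<Sum>q\<in>S - {(g,i)}. ?f a' q) = (\<Sum>q\<in>S - {(g,i)}. ?f a q)"
    by (rule sum.cong) (auto simp: a'_def)
  have "eta_map act ss a' = ?f a' (g,i) + (\<Sum>q\<in>S - {(g,i)}. ?f a' q)"
    by (subst eta_super[OF finS suppS']) (rule sum.remove[OF finS gi])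
  also have "\<dots> = zmul (a g i + e) y + (\<Sum>q\<in>S - {(g,i)}. ?f a q)"
    using rest by (simp add: a'_def y)
  also have "zmul (a g i + e) y = (if s then y else - y) + zmul (a g i) y"
    using zmul_succ[of "a g i" y] zmul_pred[of "a g i" y] by (auto simp: e_def)
  also have "(if s then y else - y) + zmul (a g i) y + (\<Sum>q\<in>S - {(g,i)}. ?f a q) = (if s then y else - y) + (zmul (a g i) y + (\<Sum>q\<in>S - {(g,i)}. ?f a q))"
    by (simp add: add.assoc)
  also have "zmul (a g i) y + (\<Sum>q\<in>S - {(g,i)}. ?f a q) = eta_map act ss a"
    unfolding y by (subst eta_super[OF finS suppS]) (use sum.remove[OF finS gi, of "?f a"] in simp)
  finally have eta: "eta_map act ss a' = sgnsum (p # l)"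
    using a(2) p by simp
  let ?h = "\<lambda>b p. nat \<bar>b (fst p) (snd p)\<bar>"
  have rest2: "(\<Sum>q\<in>S - {(g,i)}. ?h a' q) = (\<Sum>q\<in>S - {(g,i)}. ?h a q)"
    by (rule sum.cong) (auto simp: a'_def)
  have "l1_norm a' = ?h a' (g,i) + (\<Sum>q\<in>S - {(g,i)}. ?h a' q)"
    by (subst l1_super[OF finS suppS']) (rule sum.remove[OF finS gi])
  also have "\<dots> \<le> ?h a (g,i) + 1 + (\<Sum>q\<in>S - {(g,i)}. ?h a q)"
    using rest2 by (simp add: a'_def e_def) arith
  also have "\<dots> = l1_norm a + 1"
    using l1_super[OF finS suppS] sum.remove[OF finS gi, of "?h a"] by simp
  finally have "l1_norm a' \<le> length (p # l)" using a(3) by simp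
  with fe eta show ?case by blast
qed

lemma repA:
  assumes "rep (Zset K act ss) x n"
  shows "\<exists>a. free_elem K (length ss) a \<and> eta_map act ss a = x \<and> l1_norm a \<le> n"
proof -
  from assms obtain l where l: "x = sgnsum l" "snd ` set l \<subseteq> Zset K act ss" "length l \<le> n"
    unfolding rep_def by blast
  from repA_list[OF l(2)] l show ?thesis by force
qed

lemma fnorm_le:
  assumes "rep (Zset K act ss) x n"
  shows "fnorm K act ss x \<le> n"
proof -
  from repA[OF assms] obtain a where a: "free_elem K (length ss) a" "eta_map act ss a = x" "l1_norm a \<le> n"
    by blast
  have "fnorm K act ss x \<le> l1_norm a"
    unfolding fnorm_def by (rule Least_le) (use a in blast)
  with a(3) show ?thesis by simp
qed

lemma repE:
  assumes "free_elem K (length ss) a"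
  shows "rep (Zset K act ss) (eta_map act ss a) (l1_norm a)"
  unfolding eta_map_def l1_norm_def
  using assms unfolding free_elem_def
  by (intro rep_sum) (auto simp: Zset_def intro!: rep_zmul)

lemma fnorm_attained:
  assumes "rep (Zset K act ss) x n"
  shows "rep (Zset K act ss) x (fnorm K act ss x)"
proof -
  from repA[OF assms] have ex: "\<exists>a. free_elem K (length ss) a \<and> eta_map act ss a = x \<and> l1_norm a = l1_norm a"
    by blast
  have "\<exists>a. free_elem K (length ss) a \<and> eta_map act ss a = x \<and> l1_norm a = fnorm K act ss x"
    unfolding fnorm_def by (rule LeastI_ex) (use ex in blast)
  then obtain a where "free_elem K (length ss) a" "eta_map act ss a = x" "l1_norm a = fnorm K act ss x"
    by blast
  then show ?thesis using repE by metis
qed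


lemma act_add: "is_ZG_action G act \<Longrightarrow> g \<in> carrier G \<Longrightarrow> act g (x + y) = act g x + act g y"
  by (simp add: is_ZG_action_def)


lemma act_zero: "is_ZG_action G act \<Longrightarrow> g \<in> carrier G \<Longrightarrow> act g 0 = 0"
  using act_add[of G act g 0 0] by simp

lemma act_neg: "is_ZG_action G act \<Longrightarrow> g \<in> carrier G \<Longrightarrow> act g (- x) = - act g x"
  using act_add[of G act g x "- x"] act_zero[of G act g] by (metis add.right_inverse minus_unique)

lemma act_sgnsum:
  assumes "is_ZG_action G act" "g \<in> carrier G"
  shows "act g (sgnsum l) = sgnsum (map (\<lambda>(s,y). (s, act g y)) l)"
  by (induction l) (auto simp: act_zero[OF assms] act_add[OF assms] act_neg[OF assms])

lemma rep_act:
  assumes "is_ZG_action G act" "g \<in> carrier G" "rep Z x n" "\<forall>y\<in>Z. act g y \<in> Z'"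
  shows "rep Z' (act g x) n"
proof -
  from assms(3) obtain l where l: "x = sgnsum l" "snd ` set l \<subseteq> Z" "length l \<le> n"
    unfolding rep_def by blast
  show ?thesis unfolding rep_def
    apply (rule exI[of _ "map (\<lambda>(s,y). (s, act g y)) l"])
    using l assms(4) by (auto simp: act_sgnsum[OF assms(1,2)])
qed

lemma gen_rep:
  assumes act: "is_ZG_action G act" and K: "K \<subseteq> carrier G"
    and closed: "\<forall>g\<in>K. \<forall>y\<in>Y. act g y \<in> Y"
    and base: "\<forall>s\<in>S. \<exists>n. rep Y s n"
    and x: "x \<in> gen_sub K act S"
  shows "\<exists>n. rep Y x n"
  using x
proof (induction rule: gen_sub.induct)
  case (gen_base x) then show ?case using base by blast
next
  case gen_zero then show ?case using rep_zero by blast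
next
  case (gen_add x y) then show ?case using rep_add by blast
next
  case (gen_neg x) then show ?case using rep_neg by blast
next
  case (gen_act g x)
  then obtain n where "rep Y x n" by blast
  then have "rep Y (act g x) n" using rep_act[OF act, of g Y x n Y] gen_act K closed by blast
  then show ?case by blast
qed

lemma add_sgnsum:
  assumes add: "\<forall>x\<in>D. \<forall>y\<in>D. f (x + y) = f x + f y"
    and D0: "0 \<in> D" and Dneg: "\<forall>x\<in>D. - x \<in> D" and Dadd: "\<forall>x\<in>D. \<forall>y\<in>D. x + y \<in> D"
    and l: "snd ` set l \<subseteq> D"
  shows "sgnsum l \<in> D \<and> f (sgnsum l) = sgnsum (map (\<lambda>(s,y). (s, f y)) l)"
proof -
  have f0: "f 0 = 0" using add D0 by (metis add.right_neutral add_left_cancel)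
  have fneg: "f (- x) = - f x" if "x \<in> D" for x
  proof -
    have "f (x + - x) = f x + f (- x)" using add that Dneg by blast
    then show ?thesis using f0 by (metis add.right_inverse minus_unique)
  qed
  show ?thesis using l
  proof (induction l)
    case Nil then show ?case using D0 f0 by simp
  next
    case (Cons p l)
    obtain s y where p: "p = (s,y)" by force
    have y: "y \<in> D" using Cons.prems p by auto
    have IH: "sgnsum l \<in> D" "f (sgnsum l) = sgnsum (map (\<lambda>(s,y). (s, f y)) l)" using Cons by auto
    have sy: "(if s then y else - y) \<in> D" using y Dneg by auto
    have "sgnsum (p # l) \<in> D" using p sy IH Dadd by simp
    moreover have "f (sgnsum (p # l)) = sgnsum (map (\<lambda>(s,y). (s, f y)) (p # l))"
      using p add sy IH fneg y by auto
    ultimately show ?case by blast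
  qed
qed

definition cnt :: "(bool \<times> 'm) list \<Rightarrow> 'm \<Rightarrow> int" where
  "cnt l b = sum_list (map (\<lambda>(s,y). if y = b then (if s then 1 else -1) else 0) l)"

lemma cnt_Cons[simp]: "cnt ((s,y)#l) b = (if y = b then (if s then 1 else -1) else 0) + cnt l b"
  by (simp add: cnt_def)
lemma cnt_append[simp]: "cnt (l1 @ l2) b = cnt l1 b + cnt l2 b"
  by (simp add: cnt_def)
lemma cnt_notin: "b \<notin> snd ` set l \<Longrightarrow> cnt l b = 0"
  by (induction l) (auto simp: cnt_def)

lemma sgnsum_cnt:
  assumes "finite S" "snd ` set l \<subseteq> S"
  shows "sgnsum l = (\<Sum>b\<in>S. zmul (cnt l b) b)"
  using assms(2)
proof (induction l)
  case Nil then show ?case by (simp add: cnt_def)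
next
  case (Cons p l)
  obtain s y where p: "p = (s,y)" by force
  have yS: "y \<in> S" using Cons.prems p by auto
  have IH: "sgnsum l = (\<Sum>b\<in>S. zmul (cnt l b) b)" using Cons by auto
  define e :: int where "e = (if s then 1 else -1)"
  have rest: "(\<Sum>b\<in>S - {y}. zmul (cnt (p#l) b) b) = (\<Sum>b\<in>S - {y}. zmul (cnt l b) b)"
    by (rule sum.cong) (auto simp: p)
  have "(\<Sum>b\<in>S. zmul (cnt (p#l) b) b) = zmul (cnt (p#l) y) y + (\<Sum>b\<in>S - {y}. zmul (cnt (p#l) b) b)"
    by (rule sum.remove[OF assms(1) yS])
  also have "\<dots> = zmul (cnt l y + e) y + (\<Sum>b\<in>S - {y}. zmul (cnt l b) b)"
    using rest by (simp add: p e_def add.commute)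
  also have "zmul (cnt l y + e) y = (if s then y else - y) + zmul (cnt l y) y"
    using zmul_succ[of "cnt l y" y] zmul_pred[of "cnt l y" y] by (auto simp: e_def)
  also have "(if s then y else - y) + zmul (cnt l y) y + (\<Sum>b\<in>S - {y}. zmul (cnt l b) b)
     = (if s then y else - y) + (zmul (cnt l y) y + (\<Sum>b\<in>S - {y}. zmul (cnt l b) b))"
    by (simp add: add.assoc)
  also have "zmul (cnt l y) y + (\<Sum>b\<in>S - {y}. zmul (cnt l b) b) = sgnsum l"
    using IH sum.remove[OF assms(1) yS, of "\<lambda>b. zmul (cnt l b) b"] by simp
  finally show ?case using p by simp
qed

lemma cancel:
  assumes ind: "z_indep B" and l1: "snd ` set l1 \<subseteq> B - Y" and l2: "snd ` set l2 \<subseteq> B \<inter> Y"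
    and eq: "sgnsum l1 = sgnsum l2"
  shows "sgnsum l1 = 0"
proof -
  define L where "L = l1 @ flp l2"
  define S where "S = snd ` set L"
  have finS: "finite S" by (simp add: S_def)
  have SB: "S \<subseteq> B" using l1 l2 by (auto simp: S_def L_def set_flp image_Un)
  have "sgnsum L = 0" using eq by (simp add: L_def sgnsum_flp)
  then have "(\<Sum>b\<in>S. zmul (cnt L b) b) = 0" using sgnsum_cnt[OF finS, of L] by (simp add: S_def)
  then have c0: "\<forall>b\<in>S. cnt L b = 0" using ind finS SB unfolding z_indep_def by blast
  have "\<forall>b\<in>snd ` set l1. cnt l1 b = 0"
  proof
    fix b assume b: "b \<in> snd ` set l1"
    then have "b \<notin> snd ` set (flp l2)" using l1 l2 by (auto simp: set_flp)
    then have "cnt (flp l2) b = 0" by (rule cnt_notin)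
    moreover have "b \<in> S" using b by (auto simp: S_def L_def)
    ultimately show "cnt l1 b = 0" using c0 unfolding L_def by force
  qed
  then have "(\<Sum>b\<in>snd ` set l1. zmul (cnt l1 b) b) = 0" by (intro sum.neutral) simp
  then show ?thesis using sgnsum_cnt[of "snd ` set l1" l1] by simp
qed

lemma sgnsum_filter: "sgnsum l = sgnsum (filter P l) + sgnsum (filter (\<lambda>p. \<not> P p) l)"
  by (induction l) (auto simp: algebra_simps)


theorem mainTheorem16:
  fixes G :: "('g, 'b) monoid_scheme"
    and \<F> :: "'g set set"
    and H :: "'g set"
    and act :: "'g \<Rightarrow> 'm::ab_group_add \<Rightarrow> 'm"
    and L P M Q :: "'m set"
    and sL sM :: "'m list"
    and C0 :: nat
    and \<rho> :: "'m \<Rightarrow> 'm"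
  assumes "group G"
    and "\<forall>K\<in>\<F>. subgroup K G"
    and "subgroup H G"
    and "is_ZG_action G act"
    and "fg_module (carrier G) act L" and "fg_module (carrier G) act P" and "P \<subseteq> L"
    and "fg_module H act M" and "fg_module H act Q" and "Q \<subseteq> M"
    and "M \<subseteq> L" and "Q \<subseteq> P"
    and "filling_gens (carrier G) act L sL"
    and "filling_gens H act M sM"
    and "C0 \<ge> 1"
    and "\<forall>x\<in>M. fnorm (carrier G) act sL x \<le> C0 * fnorm H act sM x"
    and "F_free G act \<F> P"
    and "\<forall>x\<in>P. \<forall>y\<in>P. \<rho> (x + y) = \<rho> x + \<rho> y"
    and "\<forall>h\<in>H. \<forall>x\<in>P. \<rho> (act h x) = act h (\<rho> x)"
    and "\<rho> ` P \<subseteq> Q"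
    and "\<forall>q\<in>Q. \<rho> q = q"
  shows "\<forall>sP sQ. filling_gens (carrier G) act P sP \<longrightarrow> filling_gens H act Q sQ \<longrightarrow>
           dom_le (Dist H act sM Q sQ) (Dist (carrier G) act sL P sP)"
proof (intro allI impI)
  note Hsub = assms(3) and act = assms(4) and QM = assms(10) and QP = assms(12)
    and normLM = assms(16) and Ffree = assms(17) and radd = assms(18) and requi = assms(19)
    and rPQ = assms(20) and rid = assms(21)
  fix sP sQ
  assume fP: "filling_gens (carrier G) act P sP" and fQ: "filling_gens H act Q sQ"
  have Pgen: "P = gen_sub (carrier G) act (set sP)" using fP by (simp add: filling_gens_def)
  have Qgen: "Q = gen_sub H act (set sQ)" using fQ by (simp add: filling_gens_def)
  have Hcar: "H \<subseteq> carrier G" using Hsub by (rule subgroup.subset)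
  have oneH: "\<one>\<^bsub>G\<^esub> \<in> H" using Hsub by (rule subgroup.one_closed)
  have oneG: "\<one>\<^bsub>G\<^esub> \<in> carrier G" using oneH Hcar by blast
  have act1: "act \<one>\<^bsub>G\<^esub> x = x" for x using act by (simp add: is_ZG_action_def)
  have actm: "act g (act h x) = act (g \<otimes>\<^bsub>G\<^esub> h) x" if "g \<in> carrier G" "h \<in> carrier G" for g h x
    using act that by (simp add: is_ZG_action_def)
  from Ffree obtain B where BP: "B \<subseteq> P" and ind: "z_indep B" and span: "z_span B = P"
    and Bcl: "\<forall>g\<in>carrier G. \<forall>b\<in>B. act g b \<in> B"
    unfolding F_free_def by blast
  have P0: "0 \<in> P" and Pneg: "\<forall>x\<in>P. - x \<in> P" and Padd: "\<forall>x\<in>P. \<forall>y\<in>P. x + y \<in> P"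
    unfolding Pgen by (auto intro: gen_sub.intros)

  have "\<forall>i<length sP. \<exists>n. rep B (sP!i) n"
  proof (intro allI impI)
    fix i assume "i < length sP"
    then have "sP!i \<in> P" unfolding Pgen by (auto intro: gen_sub.gen_base)
    then show "\<exists>n. rep B (sP!i) n" using zspan_rep span by blast
  qed
  then obtain Df where Df: "\<forall>i<length sP. rep B (sP!i) (Df i)" by metis
  define D where "D = (\<Sum>i<length sP. Df i)"
  have repPB: "rep B y D" if "y \<in> Zset (carrier G) act sP" for y
  proof -
    from that obtain g i where g: "g \<in> carrier G" "i < length sP" "y = act g (sP!i)"
      unfolding Zset_def by blast
    have "rep B y (Df i)" using rep_act[OF act g(1) Df[rule_format, OF g(2)]] Bcl g by auto
    moreover have "Df i \<le> D" unfolding D_def using g(2) by (intro member_le_sum) auto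
    ultimately show ?thesis using rep_mono by blast
  qed

  have "\<forall>j<length sQ. \<exists>l. sQ!j = sgnsum l \<and> snd ` set l \<subseteq> B"
  proof (intro allI impI)
    fix j assume "j < length sQ"
    then have "sQ!j \<in> Q" unfolding Qgen by (auto intro: gen_sub.gen_base)
    then have "sQ!j \<in> z_span B" using QP span by blast
    then show "\<exists>l. sQ!j = sgnsum l \<and> snd ` set l \<subseteq> B" using zspan_rep unfolding rep_def by blast
  qed
  then obtain lj where lj: "\<forall>j<length sQ. sQ!j = sgnsum (lj j) \<and> snd ` set (lj j) \<subseteq> B" by metis
  define F where "F = (\<Union>j<length sQ. snd ` set (lj j))"
  have finF: "finite F" by (simp add: F_def)
  have FB: "F \<subseteq> B" using lj by (auto simp: F_def)
  define Y where "Y = {y. \<exists>h\<in>H. \<exists>f\<in>F. y = act h f}"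
  have YB: "Y \<subseteq> B" using FB Bcl Hcar by (auto simp: Y_def)
  have FY: "F \<subseteq> Y"
  proof
    fix f assume f: "f \<in> F"
    have "f = act \<one>\<^bsub>G\<^esub> f" using act1 by simp
    then show "f \<in> Y" unfolding Y_def using oneH f by blast
  qed
  have Ycl: "\<forall>h\<in>H. \<forall>y\<in>Y. act h y \<in> Y"
  proof (intro ballI)
    fix h y assume h: "h \<in> H" and y: "y \<in> Y"
    then obtain h' f where h': "h' \<in> H" "f \<in> F" "y = act h' f" by (auto simp: Y_def)
    have "act h y = act (h \<otimes>\<^bsub>G\<^esub> h') f" using h' h Hcar actm[of h h' f] by auto
    moreover have "h \<otimes>\<^bsub>G\<^esub> h' \<in> H" using Hsub h h'(1) by (rule subgroup.m_closed)
    ultimately show "act h y \<in> Y" using h' by (auto simp: Y_def)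
  qed
  have repQY: "\<exists>n. rep Y x n" if "x \<in> Q" for x
  proof (rule gen_rep[OF act Hcar Ycl])
    show "\<forall>s\<in>set sQ. \<exists>n. rep Y s n"
    proof
      fix s assume "s \<in> set sQ"
      then obtain j where j: "j < length sQ" "s = sQ!j" by (metis in_set_conv_nth)
      have sub: "snd ` set (lj j) \<subseteq> Y" using FY j(1) unfolding F_def by blast
      have "rep Y s (length (lj j))" unfolding rep_def
        using lj j sub by auto
      then show "\<exists>n. rep Y s n" by blast
    qed
    show "x \<in> gen_sub H act (set sQ)" using that Qgen by simp
  qed

  define ZQ where "ZQ = Zset H act sQ"
  have ZQcl: "\<forall>h\<in>H. \<forall>y\<in>ZQ. act h y \<in> ZQ"
  proof (intro ballI)
    fix h y assume h: "h \<in> H" and y: "y \<in> ZQ"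
    then obtain g i where g: "g \<in> H" "i < length sQ" "y = act g (sQ!i)" by (auto simp: ZQ_def Zset_def)
    have "act h y = act (h \<otimes>\<^bsub>G\<^esub> g) (sQ!i)" using g h Hcar actm[of h g "sQ!i"] by auto
    moreover have "h \<otimes>\<^bsub>G\<^esub> g \<in> H" using Hsub h g(1) by (rule subgroup.m_closed)
    ultimately show "act h y \<in> ZQ" using g by (auto simp: ZQ_def Zset_def)
  qed
  have repQZ: "\<exists>n. rep ZQ x n" if "x \<in> Q" for x
  proof (rule gen_rep[OF act Hcar ZQcl])
    show "\<forall>s\<in>set sQ. \<exists>n. rep ZQ s n"
    proof
      fix s assume "s \<in> set sQ"
      then obtain j where j: "j < length sQ" "s = sQ!j" by (metis in_set_conv_nth)
      have e: "s = act \<one>\<^bsub>G\<^esub> (sQ!j)" using j act1 by simp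
      have "s \<in> ZQ" unfolding ZQ_def Zset_def using e oneH j(1) by blast
      then show "\<exists>n. rep ZQ s n" using rep_atom by blast
    qed
    show "x \<in> gen_sub H act (set sQ)" using that Qgen by simp
  qed
  have "\<forall>f\<in>F. \<exists>n. rep ZQ (\<rho> f) n"
  proof
    fix f assume "f \<in> F"
    then have "\<rho> f \<in> Q" using FB BP rPQ by blast
    then show "\<exists>n. rep ZQ (\<rho> f) n" by (rule repQZ)
  qed
  then obtain Rf where Rf: "\<forall>f\<in>F. rep ZQ (\<rho> f) (Rf f)" by metis
  define R where "R = (\<Sum>f\<in>F. Rf f)"
  have repYR: "rep ZQ (\<rho> b) R" if "b \<in> Y" for b
  proof -
    from that obtain h f where hf: "h \<in> H" "f \<in> F" "b = act h f" by (auto simp: Y_def)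
    have "\<rho> b = act h (\<rho> f)" using requi hf FB BP by blast
    moreover have "rep ZQ (act h (\<rho> f)) (Rf f)"
      using rep_act[OF act _ Rf[rule_format, OF hf(2)]] hf(1) Hcar ZQcl by blast
    moreover have "Rf f \<le> R" unfolding R_def using hf(2) finF by (intro member_le_sum) auto
    ultimately show ?thesis using rep_mono[OF _ _ subset_refl] by metis
  qed

  have key: "fnorm H act sQ \<gamma> \<le> R * D * fnorm (carrier G) act sP \<gamma>" if \<gamma>Q: "\<gamma> \<in> Q" for \<gamma>
  proof -
    define ZP where "ZP = Zset (carrier G) act sP"
    have ZPcl: "\<forall>h\<in>carrier G. \<forall>y\<in>ZP. act h y \<in> ZP"
    proof (intro ballI)
      fix h y assume h: "h \<in> carrier G" and y: "y \<in> ZP"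
      then obtain g i where g: "g \<in> carrier G" "i < length sP" "y = act g (sP!i)"
        by (auto simp: ZP_def Zset_def)
      have "act h y = act (h \<otimes>\<^bsub>G\<^esub> g) (sP!i)" using g h actm[of h g "sP!i"] by auto
      moreover have "h \<otimes>\<^bsub>G\<^esub> g \<in> carrier G" using assms(1) h g(1) by (simp add: group.is_monoid monoid.m_closed)
      ultimately show "act h y \<in> ZP" using g by (auto simp: ZP_def Zset_def)
    qed
    have "\<exists>n. rep ZP \<gamma> n"
    proof (rule gen_rep[OF act subset_refl ZPcl])
      show "\<forall>s\<in>set sP. \<exists>n. rep ZP s n"
      proof
        fix s assume "s \<in> set sP"
        then obtain j where j: "j < length sP" "s = sP!j" by (metis in_set_conv_nth)
        have e: "s = act \<one>\<^bsub>G\<^esub> (sP!j)" using j act1 by simp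
        have "s \<in> ZP" unfolding ZP_def Zset_def using e oneG j(1) by blast
        then show "\<exists>n. rep ZP s n" using rep_atom by blast
      qed
      show "\<gamma> \<in> gen_sub (carrier G) act (set sP)" using \<gamma>Q QP Pgen by blast
    qed
    then obtain n0 where "rep ZP \<gamma> n0" by blast
    then have "rep ZP \<gamma> (fnorm (carrier G) act sP \<gamma>)" unfolding ZP_def by (rule fnorm_attained)
    then obtain l0 where l0: "\<gamma> = sgnsum l0" "snd ` set l0 \<subseteq> ZP" "length l0 \<le> fnorm (carrier G) act sP \<gamma>"
      unfolding rep_def by blast
    have "rep B (sgnsum l0) (D * length l0)"
      by (rule rep_subst) (use l0(2) repPB in \<open>auto simp: ZP_def\<close>)
    then have "rep B \<gamma> (D * fnorm (carrier G) act sP \<gamma>)"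
      using l0 rep_mono[of B \<gamma> "D * length l0" "D * fnorm (carrier G) act sP \<gamma>" B] by auto
    then obtain l where l: "\<gamma> = sgnsum l" "snd ` set l \<subseteq> B" "length l \<le> D * fnorm (carrier G) act sP \<gamma>"
      unfolding rep_def by blast
    obtain nq where "rep Y \<gamma> nq" using repQY \<gamma>Q by blast
    then obtain lq where lq: "\<gamma> = sgnsum lq" "snd ` set lq \<subseteq> Y" unfolding rep_def by blast
    define lin where "lin = filter (\<lambda>p. snd p \<in> Y) l"
    define lout where "lout = filter (\<lambda>p. \<not> snd p \<in> Y) l"
    have split: "\<gamma> = sgnsum lin + sgnsum lout" using l(1) sgnsum_filter unfolding lin_def lout_def by blast
    have "sgnsum lout = sgnsum (lq @ flp lin)"
      using split lq(1) by (simp add: sgnsum_flp algebra_simps)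
    moreover have "snd ` set lout \<subseteq> B - Y" using l(2) by (auto simp: lout_def)
    moreover have "snd ` set (lq @ flp lin) \<subseteq> B \<inter> Y"
      using lq(2) YB l(2) by (auto simp: lin_def set_flp image_Un)
    ultimately have "sgnsum lout = 0" using cancel[OF ind] by blast
    then have \<gamma>in: "\<gamma> = sgnsum lin" using split by simp
    have linP: "snd ` set lin \<subseteq> P" using l(2) BP by (auto simp: lin_def)
    have "\<gamma> = \<rho> \<gamma>" using rid \<gamma>Q by simp
    also have "\<dots> = sgnsum (map (\<lambda>(s,y). (s, \<rho> y)) lin)"
      using add_sgnsum[OF radd P0 Pneg Padd linP] \<gamma>in by simp
    finally have \<gamma>2: "\<gamma> = sgnsum (map (\<lambda>(s,y). (s, \<rho> y)) lin)" .
    have "rep ZQ (sgnsum (map (\<lambda>(s,y). (s, \<rho> y)) lin)) (R * length (map (\<lambda>(s,y). (s, \<rho> y)) lin))"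
    proof (rule rep_subst)
      show "\<forall>p\<in>set (map (\<lambda>(s,y). (s, \<rho> y)) lin). rep ZQ (snd p) R"
        using repYR by (auto simp: lin_def)
    qed
    then have "rep ZQ \<gamma> (R * length lin)" using \<gamma>2 by simp
    then have "fnorm H act sQ \<gamma> \<le> R * length lin" unfolding ZQ_def by (rule fnorm_le)
    also have "\<dots> \<le> R * length l" unfolding lin_def by simp
    also have "\<dots> \<le> R * (D * fnorm (carrier G) act sP \<gamma>)" using l(3) by simp
    finally show ?thesis by (simp add: mult.assoc)
  qed

  define C where "C = C0 + R * D + 1"
  show "dom_le (Dist H act sM Q sQ) (Dist (carrier G) act sL P sP)"
    unfolding dom_le_def
  proof (intro exI conjI allI)
    show "0 < C" by (simp add: C_def)
    fix n
    show "Dist H act sM Q sQ n \<le> enat C * Dist (carrier G) act sL P sP (C * n + C) + enat (C * n + C)"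
      unfolding Dist_def
    proof (rule SUP_least)
      fix \<gamma> assume "\<gamma> \<in> {\<gamma>. \<gamma> \<in> Q \<and> fnorm H act sM \<gamma> \<le> n}"
      then have \<gamma>Q: "\<gamma> \<in> Q" and \<gamma>n: "fnorm H act sM \<gamma> \<le> n" by auto
      have "fnorm (carrier G) act sL \<gamma> \<le> C0 * fnorm H act sM \<gamma>" using normLM \<gamma>Q QM by blast
      also have "\<dots> \<le> C0 * n" using \<gamma>n by simp
      also have "\<dots> \<le> C * n + C" unfolding C_def by (simp add: add_mult_distrib)
      finally have "\<gamma> \<in> {\<gamma>. \<gamma> \<in> P \<and> fnorm (carrier G) act sL \<gamma> \<le> C * n + C}" using \<gamma>Q QP by blast
      then have up: "enat (fnorm (carrier G) act sP \<gamma>) \<le>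
          (SUP \<gamma>\<in>{\<gamma>. \<gamma> \<in> P \<and> fnorm (carrier G) act sL \<gamma> \<le> C * n + C}. enat (fnorm (carrier G) act sP \<gamma>))"
        by (rule SUP_upper)
      have "enat (fnorm H act sQ \<gamma>) \<le> enat (C * fnorm (carrier G) act sP \<gamma>)"
      proof -
        have "R * D * fnorm (carrier G) act sP \<gamma> \<le> C * fnorm (carrier G) act sP \<gamma>"
          unfolding C_def by (intro mult_le_mono1) simp
        then show ?thesis using key[OF \<gamma>Q] by (simp only: enat_ord_simps)
      qed
      also have "\<dots> = enat C * enat (fnorm (carrier G) act sP \<gamma>)" by simp
      also have "\<dots> \<le> enat C * (SUP \<gamma>\<in>{\<gamma>. \<gamma> \<in> P \<and> fnorm (carrier G) act sL \<gamma> \<le> C * n + C}. enat (fnorm (carrier G) act sP \<gamma>))"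
        using up by (rule mult_left_mono) simp
      also have "\<dots> \<le> enat C * (SUP \<gamma>\<in>{\<gamma>. \<gamma> \<in> P \<and> fnorm (carrier G) act sL \<gamma> \<le> C * n + C}. enat (fnorm (carrier G) act sP \<gamma>)) + enat (C * n + C)"
        by simp
      finally show "enat (fnorm H act sQ \<gamma>) \<le> enat C * (SUP \<gamma>\<in>{\<gamma>. \<gamma> \<in> P \<and> fnorm (carrier G) act sL \<gamma> \<le> C * n + C}. enat (fnorm (carrier G) act sP \<gamma>)) + enat (C * n + C)" .
    qed
  qed
qed

end
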